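(* Under the model and standing assumption below, for every $n$, every admissible control $T^n\in\mathcal A^n$, and all $t\ge0$, one has $\hat W^n_t\ge\Gamma_1[\hat F^n](t)$.
   Context: Finite sets $\mathcal I$ (size $I$), $\mathcal K$ (size $K$), $\mathcal J\subset\mathcal I\times\mathcal K$ (size $J$); $\mathcal J_i=\{(i,k)\in\mathcal J\}$, $\mathcal J^k=\{(i,k)\in\mathcal J\}$. $\lambda_i,\mu_j\in(0,\infty)$; $R$ is $I\times J$ with $R_{ij}=\mu_j$ if $j\in\mathcal J_i$, else $0$; $G$ is $K\times J$ with $G_{kj}=1_{j\in\mathcal J^k}$. LP: minimize $\rho$ s.t. $R\xi=\lambda$, $G\xi\le\rho1_K$, $\xi\ge0$. Dual: maximize $y\cdot\lambda$ s.t. $\sum_kz_k=1$, $yR\le zG$, $z\ge0$. Standing assumption: LP optimal value $1$; every $\xi$ with $(\xi,1)$ optimal satisfies $(G\xi)_k=1$ for all $k$; the dual has a unique solution $(y^*,z^* )$. Model: rates $\lambda^n_i,\mu^n_j>0$ with $\hat\lambda^n_i:=n^{-1/2}(\lambda^n_i-n\lambda_i)\to\hat\lambda_i\in\mathbb R$, $\hat\mu^n_j:=n^{-1/2}(\mu^n_j-n\mu_j)\to\hat\mu_j\in\mathbb R$. Mutually independent renewal processes $\check A_i,\check S_j$ with right-continuous paths and IID strictly positive mean-1 interarrival times with finite squared coefficients of variation ($C^2_{A_i}>0$), and an independent random element $\Upsilon$ in a Polish space; $A^n_i(t)=\check A_i(\lambda^n_it)$, $S^n_j(t)=\check S_j(\mu^n_jt)$.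 An admissible control $T^n\in\mathcal A^n$ is a process $(T^n_j)_{j\in\mathcal J}$ with continuous nondecreasing $1$-Lipschitz paths, $T^n(0)=0$, such that with $D^n_j=S^n_j\circ T^n_j$, $X^n_i(t)=A^n_i(t)-\sum_{j\in\mathcal J_i}D^n_j(t)$, $I^n_k(t)=t-(GT^n(t))_k$, one has $X^n_i\ge0$, $I^n_k$ nondecreasing, and $T^n$ adapted to $\sigma\{A^n(s),D^n(s),s\le t;\Upsilon\}$. Define $\hat X^n=n^{-1/2}X^n$, $\hat W^n_t=y^*\cdot\hat X^n_t$, $\hat A^n_i(t)=n^{-1/2}(A^n_i(t)-\lambda^n_it)$, $\hat S^n_j(t)=n^{-1/2}(S^n_j(t)-\mu^n_jt)$, and $\hat F^n(t)=\sum_iy^*_i\big(\hat A^n_i(t)-\sum_{j\in\mathcal J_i}\hat S^n_j(T^n_j(t))+\hat\lambda^n_it-\sum_{j\in\mathcal J_i}\hat\mu^n_jT^n_j(t)\big)$. Skorohod map on the half line: for $\psi\in D_{\mathbb R}[0,\infty)$, $\Gamma_1[\psi](t)=\psi(t)+\sup_{0\le s\le t}\psi(s)^-$. *)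

theory Defs
  imports "HOL-Probability.Probability"
begin

text \<open>Index sets: the server-class sets are the finite types 'i and 'k;
  J is a subset of 'i \<times> 'k.  Vectors indexed by J are functions on 'i \<times> 'k
  of which only the values on J matter.\<close>

definition Rmat :: "('i \<times> 'k) set \<Rightarrow> ('i \<times> 'k \<Rightarrow> real) \<Rightarrow> 'i \<Rightarrow> 'i \<times> 'k \<Rightarrow> real" where
  "Rmat J mu i j = (if j \<in> J \<and> fst j = i then mu j else 0)"

definition Gmat :: "('i \<times> 'k) set \<Rightarrow> 'k \<Rightarrow> 'i \<times> 'k \<Rightarrow> real" where
  "Gmat J k j = (if j \<in> J \<and> snd j = k then 1 else 0)"

definition lp_feasible ::
  "('i \<times> 'k) set \<Rightarrow> ('i \<Rightarrow> real) \<Rightarrow> ('i \<times> 'k \<Rightarrow> real) \<Rightarrow> ('i \<times> 'k \<Rightarrow> real) \<Rightarrow> real \<Rightarrow> bool" where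
  "lp_feasible J lam mu xi rho \<longleftrightarrow>
     (\<forall>i. (\<Sum>j\<in>J. Rmat J mu i j * xi j) = lam i) \<and>
     (\<forall>k. (\<Sum>j\<in>J. Gmat J k j * xi j) \<le> rho) \<and>
     (\<forall>j\<in>J. 0 \<le> xi j)"

definition lp_value :: "('i \<times> 'k) set \<Rightarrow> ('i \<Rightarrow> real) \<Rightarrow> ('i \<times> 'k \<Rightarrow> real) \<Rightarrow> real" where
  "lp_value J lam mu = Inf {rho. \<exists>xi. lp_feasible J lam mu xi rho}"

definition lp_has_value :: "('i \<times> 'k) set \<Rightarrow> ('i \<Rightarrow> real) \<Rightarrow> ('i \<times> 'k \<Rightarrow> real) \<Rightarrow> real \<Rightarrow> bool" where
  "lp_has_value J lam mu v \<longleftrightarrow>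
     {rho. \<exists>xi. lp_feasible J lam mu xi rho} \<noteq> {} \<and>
     bdd_below {rho. \<exists>xi. lp_feasible J lam mu xi rho} \<and>
     lp_value J lam mu = v"

definition lp_optimal ::
  "('i \<times> 'k) set \<Rightarrow> ('i \<Rightarrow> real) \<Rightarrow> ('i \<times> 'k \<Rightarrow> real) \<Rightarrow> ('i \<times> 'k \<Rightarrow> real) \<Rightarrow> real \<Rightarrow> bool" where
  "lp_optimal J lam mu xi rho \<longleftrightarrow> lp_feasible J lam mu xi rho \<and> rho = lp_value J lam mu"

definition dual_feasible ::
  "('i::finite \<times> 'k::finite) set \<Rightarrow> ('i \<times> 'k \<Rightarrow> real) \<Rightarrow> ('i \<Rightarrow> real) \<Rightarrow> ('k \<Rightarrow> real) \<Rightarrow> bool" where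
  "dual_feasible J mu y z \<longleftrightarrow>
     (\<Sum>k\<in>UNIV. z k) = 1 \<and>
     (\<forall>j\<in>J. (\<Sum>i\<in>UNIV. y i * Rmat J mu i j) \<le> (\<Sum>k\<in>UNIV. z k * Gmat J k j)) \<and>
     (\<forall>k. 0 \<le> z k)"

definition dual_optimal ::
  "('i::finite \<times> 'k::finite) set \<Rightarrow> ('i \<Rightarrow> real) \<Rightarrow> ('i \<times> 'k \<Rightarrow> real) \<Rightarrow> ('i \<Rightarrow> real) \<Rightarrow> ('k \<Rightarrow> real) \<Rightarrow> bool" where
  "dual_optimal J lam mu y z \<longleftrightarrow>
     dual_feasible J mu y z \<and>
     (\<forall>y' z'. dual_feasible J mu y' z' \<longrightarrow> (\<Sum>i\<in>UNIV. y' i * lam i) \<le> (\<Sum>i\<in>UNIV. y i * lam i))"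

definition standing_assumption ::
  "('i::finite \<times> 'k::finite) set \<Rightarrow> ('i \<Rightarrow> real) \<Rightarrow> ('i \<times> 'k \<Rightarrow> real) \<Rightarrow> bool" where
  "standing_assumption J lam mu \<longleftrightarrow>
     lp_has_value J lam mu 1 \<and>
     (\<forall>xi. lp_optimal J lam mu xi 1 \<longrightarrow> (\<forall>k. (\<Sum>j\<in>J. Gmat J k j * xi j) = 1)) \<and>
     (\<exists>!yz. dual_optimal J lam mu (fst yz) (snd yz))"

definition renewal_set :: "(nat \<Rightarrow> real) \<Rightarrow> real \<Rightarrow> nat set" where
  "renewal_set u t = {m. 1 \<le> m \<and> (\<Sum>l=1..m. u l) \<le> t}"

definition renewal_process :: "'a measure \<Rightarrow> (real \<Rightarrow> 'a \<Rightarrow> real) \<Rightarrow> (nat \<Rightarrow> 'a \<Rightarrow> real) \<Rightarrow> bool" where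
  "renewal_process M N u \<longleftrightarrow>
     prob_space.indep_vars M (\<lambda>_. borel) u {1..} \<and>
     (\<forall>m\<ge>1. distr M borel (u m) = distr M borel (u 1)) \<and>
     (\<forall>m\<ge>1. \<forall>\<omega>\<in>space M. 0 < u m \<omega>) \<and>
     integrable M (u 1) \<and> (\<integral>\<omega>. u 1 \<omega> \<partial>M) = 1 \<and>
     integrable M (\<lambda>\<omega>. (u 1 \<omega>)\<^sup>2) \<and>
     (\<forall>\<omega>\<in>space M. \<forall>t\<ge>0. finite (renewal_set (\<lambda>l. u l \<omega>) t) \<and>
                              N t \<omega> = real (card (renewal_set (\<lambda>l. u l \<omega>) t))) \<and>
     (\<forall>\<omega>\<in>space M. \<forall>t\<ge>0. continuous (at_right t) (\<lambda>s. N s \<omega>))"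

definition scv :: "'a measure \<Rightarrow> ('a \<Rightarrow> real) \<Rightarrow> real" where
  "scv M X = (\<integral>\<omega>. (X \<omega> - (\<integral>\<omega>'. X \<omega>' \<partial>M))\<^sup>2 \<partial>M) / (\<integral>\<omega>. X \<omega> \<partial>M)\<^sup>2"

definition proc_events :: "'a measure \<Rightarrow> (real \<Rightarrow> 'a \<Rightarrow> real) \<Rightarrow> 'a set set" where
  "proc_events M N = sigma_sets (space M) {N t -` B \<inter> space M | t B. 0 \<le> t \<and> B \<in> sets borel}"

definition elem_events :: "'a measure \<Rightarrow> ('a \<Rightarrow> 'u::topological_space) \<Rightarrow> 'a set set" where
  "elem_events M Y = sigma_sets (space M) {Y -` B \<inter> space M | B. B \<in> sets borel}"

datatype ('i, 'k) source = ArrSrc 'i | SrvSrc "'i \<times> 'k" | UpsSrc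

definition source_events ::
  "'a measure \<Rightarrow> ('i \<Rightarrow> real \<Rightarrow> 'a \<Rightarrow> real) \<Rightarrow> ('i \<times> 'k \<Rightarrow> real \<Rightarrow> 'a \<Rightarrow> real) \<Rightarrow> ('a \<Rightarrow> 'u::topological_space)
   \<Rightarrow> ('i, 'k) source \<Rightarrow> 'a set set" where
  "source_events M A S Y s = (case s of ArrSrc i \<Rightarrow> proc_events M (A i)
                                       | SrvSrc j \<Rightarrow> proc_events M (S j)
                                       | UpsSrc \<Rightarrow> elem_events M Y)"

definition An :: "('i \<Rightarrow> real \<Rightarrow> 'a \<Rightarrow> real) \<Rightarrow> ('i \<Rightarrow> real) \<Rightarrow> 'i \<Rightarrow> real \<Rightarrow> 'a \<Rightarrow> real" where
  "An Ac lamn i t \<omega> = Ac i (lamn i * t) \<omega>"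

definition Sn :: "('j \<Rightarrow> real \<Rightarrow> 'a \<Rightarrow> real) \<Rightarrow> ('j \<Rightarrow> real) \<Rightarrow> 'j \<Rightarrow> real \<Rightarrow> 'a \<Rightarrow> real" where
  "Sn Sc mun j t \<omega> = Sc j (mun j * t) \<omega>"

definition Dn :: "('j \<Rightarrow> real \<Rightarrow> 'a \<Rightarrow> real) \<Rightarrow> ('j \<Rightarrow> real) \<Rightarrow> ('j \<Rightarrow> real \<Rightarrow> 'a \<Rightarrow> real) \<Rightarrow> 'j \<Rightarrow> real \<Rightarrow> 'a \<Rightarrow> real" where
  "Dn Sc mun T j t \<omega> = Sn Sc mun j (T j t \<omega>) \<omega>"

definition Xn ::
  "('i \<times> 'k) set \<Rightarrow> ('i \<Rightarrow> real \<Rightarrow> 'a \<Rightarrow> real) \<Rightarrow> ('i \<times> 'k \<Rightarrow> real \<Rightarrow> 'a \<Rightarrow> real) \<Rightarrow> ('i \<Rightarrow> real) \<Rightarrow> ('i \<times> 'k \<Rightarrow> real)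
   \<Rightarrow> ('i \<times> 'k \<Rightarrow> real \<Rightarrow> 'a \<Rightarrow> real) \<Rightarrow> 'i \<Rightarrow> real \<Rightarrow> 'a \<Rightarrow> real" where
  "Xn J Ac Sc lamn mun T i t \<omega> = An Ac lamn i t \<omega> - (\<Sum>j\<in>{j\<in>J. fst j = i}. Dn Sc mun T j t \<omega>)"

definition In :: "('i \<times> 'k) set \<Rightarrow> ('i \<times> 'k \<Rightarrow> real \<Rightarrow> 'a \<Rightarrow> real) \<Rightarrow> 'k \<Rightarrow> real \<Rightarrow> 'a \<Rightarrow> real" where
  "In J T k t \<omega> = t - (\<Sum>j\<in>J. Gmat J k j * T j t \<omega>)"

definition info :: "'a measure \<Rightarrow> ('i \<times> 'k) set \<Rightarrow> ('i \<Rightarrow> real \<Rightarrow> 'a \<Rightarrow> real) \<Rightarrow> ('i \<times> 'k \<Rightarrow> real \<Rightarrow> 'a \<Rightarrow> real)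
   \<Rightarrow> ('a \<Rightarrow> 'u::topological_space) \<Rightarrow> real \<Rightarrow> 'a measure" where
  "info M J A D Y t = sigma (space M)
     ({A i s -` B \<inter> space M | i s B. 0 \<le> s \<and> s \<le> t \<and> B \<in> sets borel} \<union>
      {D j s -` B \<inter> space M | j s B. j \<in> J \<and> 0 \<le> s \<and> s \<le> t \<and> B \<in> sets borel} \<union>
      {Y -` B \<inter> space M | B. B \<in> sets borel})"

definition admissible ::
  "'a measure \<Rightarrow> ('i \<times> 'k) set \<Rightarrow> ('i \<Rightarrow> real \<Rightarrow> 'a \<Rightarrow> real) \<Rightarrow> ('i \<times> 'k \<Rightarrow> real \<Rightarrow> 'a \<Rightarrow> real)
   \<Rightarrow> ('a \<Rightarrow> 'u::topological_space) \<Rightarrow> ('i \<Rightarrow> real) \<Rightarrow> ('i \<times> 'k \<Rightarrow> real)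
   \<Rightarrow> ('i \<times> 'k \<Rightarrow> real \<Rightarrow> 'a \<Rightarrow> real) \<Rightarrow> bool" where
  "admissible M J Ac Sc Y lamn mun T \<longleftrightarrow>
     (\<forall>\<omega>\<in>space M. \<forall>j\<in>J.
        T j 0 \<omega> = 0 \<and>
        continuous_on {0..} (\<lambda>t. T j t \<omega>) \<and>
        mono_on {0..} (\<lambda>t. T j t \<omega>) \<and>
        (\<forall>s\<ge>0. \<forall>t\<ge>0. \<bar>T j t \<omega> - T j s \<omega>\<bar> \<le> \<bar>t - s\<bar>)) \<and>
     (\<forall>\<omega>\<in>space M. \<forall>i. \<forall>t\<ge>0. 0 \<le> Xn J Ac Sc lamn mun T i t \<omega>) \<and>
     (\<forall>\<omega>\<in>space M. \<forall>k. mono_on {0..} (\<lambda>t. In J T k t \<omega>)) \<and>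
     (\<forall>j\<in>J. \<forall>t\<ge>0. T j t \<in> borel_measurable (info M J (An Ac lamn) (Dn Sc mun T) Y t))"

definition Xhat ::
  "nat \<Rightarrow> ('i \<times> 'k) set \<Rightarrow> ('i \<Rightarrow> real \<Rightarrow> 'a \<Rightarrow> real) \<Rightarrow> ('i \<times> 'k \<Rightarrow> real \<Rightarrow> 'a \<Rightarrow> real) \<Rightarrow> ('i \<Rightarrow> real) \<Rightarrow> ('i \<times> 'k \<Rightarrow> real)
   \<Rightarrow> ('i \<times> 'k \<Rightarrow> real \<Rightarrow> 'a \<Rightarrow> real) \<Rightarrow> 'i \<Rightarrow> real \<Rightarrow> 'a \<Rightarrow> real" where
  "Xhat n J Ac Sc lamn mun T i t \<omega> = Xn J Ac Sc lamn mun T i t \<omega> / sqrt (real n)"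

definition What ::
  "nat \<Rightarrow> ('i::finite \<Rightarrow> real) \<Rightarrow> ('i \<times> 'k) set \<Rightarrow> ('i \<Rightarrow> real \<Rightarrow> 'a \<Rightarrow> real) \<Rightarrow> ('i \<times> 'k \<Rightarrow> real \<Rightarrow> 'a \<Rightarrow> real)
   \<Rightarrow> ('i \<Rightarrow> real) \<Rightarrow> ('i \<times> 'k \<Rightarrow> real) \<Rightarrow> ('i \<times> 'k \<Rightarrow> real \<Rightarrow> 'a \<Rightarrow> real) \<Rightarrow> real \<Rightarrow> 'a \<Rightarrow> real" where
  "What n y J Ac Sc lamn mun T t \<omega> = (\<Sum>i\<in>UNIV. y i * Xhat n J Ac Sc lamn mun T i t \<omega>)"

definition Ahat :: "nat \<Rightarrow> ('i \<Rightarrow> real \<Rightarrow> 'a \<Rightarrow> real) \<Rightarrow> ('i \<Rightarrow> real) \<Rightarrow> 'i \<Rightarrow> real \<Rightarrow> 'a \<Rightarrow> real" where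
  "Ahat n Ac lamn i t \<omega> = (An Ac lamn i t \<omega> - lamn i * t) / sqrt (real n)"

definition Shat :: "nat \<Rightarrow> ('j \<Rightarrow> real \<Rightarrow> 'a \<Rightarrow> real) \<Rightarrow> ('j \<Rightarrow> real) \<Rightarrow> 'j \<Rightarrow> real \<Rightarrow> 'a \<Rightarrow> real" where
  "Shat n Sc mun j t \<omega> = (Sn Sc mun j t \<omega> - mun j * t) / sqrt (real n)"

definition ratehat :: "nat \<Rightarrow> real \<Rightarrow> real \<Rightarrow> real" where
  "ratehat n rn r = (rn - real n * r) / sqrt (real n)"

definition Fhat ::
  "nat \<Rightarrow> ('i::finite \<Rightarrow> real) \<Rightarrow> ('i \<times> 'k) set \<Rightarrow> ('i \<Rightarrow> real) \<Rightarrow> ('i \<times> 'k \<Rightarrow> real)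
   \<Rightarrow> ('i \<Rightarrow> real \<Rightarrow> 'a \<Rightarrow> real) \<Rightarrow> ('i \<times> 'k \<Rightarrow> real \<Rightarrow> 'a \<Rightarrow> real) \<Rightarrow> ('i \<Rightarrow> real) \<Rightarrow> ('i \<times> 'k \<Rightarrow> real)
   \<Rightarrow> ('i \<times> 'k \<Rightarrow> real \<Rightarrow> 'a \<Rightarrow> real) \<Rightarrow> real \<Rightarrow> 'a \<Rightarrow> real" where
  "Fhat n y J lam mu Ac Sc lamn mun T t \<omega> =
     (\<Sum>i\<in>UNIV. y i *
        (Ahat n Ac lamn i t \<omega>
         - (\<Sum>j\<in>{j\<in>J. fst j = i}. Shat n Sc mun j (T j t \<omega>) \<omega>)
         + ratehat n (lamn i) (lam i) * t
         - (\<Sum>j\<in>{j\<in>J. fst j = i}. ratehat n (mun j) (mu j) * T j t \<omega>)))"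

definition Gamma1 :: "(real \<Rightarrow> real) \<Rightarrow> real \<Rightarrow> real" where
  "Gamma1 psi t = psi t + (SUP s\<in>{0..t}. max 0 (- psi s))"

end

theory Submission imports Defs begin

lemma dual_value_ge:
  fixes J :: "('i::finite \<times> 'k::finite) set"
  assumes lam_pos: "\<And>i. 0 < lam i"
    and mu_pos: "\<And>j. j \<in> J \<Longrightarrow> 0 < mu j"
    and hv: "lp_has_value J lam mu 1"
    and dopt: "dual_optimal J lam mu y z"
  shows "1 \<le> (\<Sum>i\<in>UNIV. y i * lam i)"
proof (rule field_le_epsilon)
  fix e :: real assume e: "0 < e"
  define feas where "feas \<xi> \<longleftrightarrow> (\<forall>i. (\<Sum>j\<in>J. Rmat J mu i j * \<xi> j) = lam i) \<and> (\<forall>j\<in>J. 0 \<le> \<xi> j)"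
    for \<xi> :: "'i \<times> 'k \<Rightarrow> real"
  define Gv where "Gv \<xi> = (\<chi> k. \<Sum>j\<in>J. Gmat J k j * \<xi> j)" for \<xi> :: "'i \<times> 'k \<Rightarrow> real"
  define p :: "real^'k" where "p = (\<chi> k. 1 - e)"
  define S where "S = {Gv \<xi> + v - p | \<xi> v. feas \<xi> \<and> (\<forall>k. 0 \<le> v$k)}"
  have hv': "{rho. \<exists>xi. lp_feasible J lam mu xi rho} \<noteq> {}"
     "bdd_below {rho. \<exists>xi. lp_feasible J lam mu xi rho}"
     "Inf {rho. \<exists>xi. lp_feasible J lam mu xi rho} = 1"
    using hv unfolding lp_has_value_def lp_value_def by auto
  obtain \<xi>0 r0 where "lp_feasible J lam mu \<xi>0 r0" using hv'(1) by auto
  then have f0: "feas \<xi>0" unfolding feas_def lp_feasible_def by auto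
  have cvx: "convex S"
  proof (rule convexI)
    fix x1 x2 and u1 u2 :: real assume x1: "x1 \<in> S" and x2: "x2 \<in> S" and u0: "0 \<le> u1" "0 \<le> u2" "u1 + u2 = 1"
    then have u: "0 \<le> u1 \<and> 0 \<le> u2 \<and> u1 + u2 = 1" by simp
    obtain \<xi>1 v1 where 1: "x1 = Gv \<xi>1 + v1 - p" "feas \<xi>1" "\<forall>k. 0 \<le> v1$k" using x1 unfolding S_def by auto
    obtain \<xi>2 v2 where 2: "x2 = Gv \<xi>2 + v2 - p" "feas \<xi>2" "\<forall>k. 0 \<le> v2$k" using x2 unfolding S_def by auto
    define \<xi> where "\<xi> j = u1 * \<xi>1 j + u2 * \<xi>2 j" for j
    have "feas \<xi>"
      using 1(2) 2(2) u unfolding feas_def \<xi>_def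
      apply (auto simp: algebra_simps sum.distrib sum_distrib_left[symmetric] distrib_left[symmetric])
      by (metis distrib_right mult_1)
    moreover have "\<forall>k. 0 \<le> (u1 *\<^sub>R v1 + u2 *\<^sub>R v2)$k" using 1(3) 2(3) u by simp
    moreover have "u1 *\<^sub>R x1 + u2 *\<^sub>R x2 = Gv \<xi> + (u1 *\<^sub>R v1 + u2 *\<^sub>R v2) - p"
    proof -
      have "u1 * (1-e) + u2 * (1-e) = 1 - e" using u by (metis distrib_right mult_1)
      then show ?thesis using u unfolding 1(1) 2(1) Gv_def \<xi>_def p_def
        by (simp add: vec_eq_iff algebra_simps sum.distrib sum_distrib_left)
    qed
    ultimately show "u1 *\<^sub>R x1 + u2 *\<^sub>R x2 \<in> S" unfolding S_def by blast
  qed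
  have notin: "0 \<notin> S"
  proof
    assume "0 \<in> S"
    then obtain \<xi> v where h: "0 = Gv \<xi> + v - p" "feas \<xi>" "\<forall>k. 0 \<le> v$k" unfolding S_def by auto
    have "\<forall>k. (\<Sum>j\<in>J. Gmat J k j * \<xi> j) \<le> 1 - e"
    proof
      fix k
      have "(Gv \<xi> + v - p)$k = 0" using h(1) by simp
      then show "(\<Sum>j\<in>J. Gmat J k j * \<xi> j) \<le> 1 - e" using h(3)[rule_format, of k]
        unfolding Gv_def p_def by simp
    qed
    then have "lp_feasible J lam mu \<xi> (1-e)" using h(2) unfolding lp_feasible_def feas_def by auto
    then have "1 \<le> 1 - e" using cInf_lower[OF _ hv'(2), of "1-e"] hv'(3) by auto
    then show False using e by simp
  qed
  obtain a where a0: "a \<noteq> 0" and aS: "\<forall>x\<in>S. 0 \<le> inner a x"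
    using separating_hyperplane_set_0[OF cvx notin] by auto
  have inS: "Gv \<xi> + v - p \<in> S" if "feas \<xi>" "\<forall>k. 0 \<le> v$k" for \<xi> v
    using that unfolding S_def by blast
  have anon: "0 \<le> a$k" for k
  proof (rule ccontr)
    assume "\<not> 0 \<le> a$k"
    then have ak: "a$k < 0" by simp
    define C0 where "C0 = inner a (Gv \<xi>0 - p)"
    define c where "c = (\<bar>C0\<bar> + 1) / (- a$k)"
    have cpos: "0 < c" using ak unfolding c_def by (simp add: divide_pos_neg add_pos_nonneg)
    have cak: "c * a$k = - (\<bar>C0\<bar> + 1)" using ak unfolding c_def by (simp add: field_simps)
    have "0 \<le> inner a (Gv \<xi>0 + c *\<^sub>R axis k 1 - p)"
      using aS inS[OF f0, of "c *\<^sub>R axis k 1"] cpos by (auto simp: axis_def)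
    also have "inner a (Gv \<xi>0 + c *\<^sub>R axis k 1 - p) = C0 + c * a$k"
      unfolding C0_def by (simp add: inner_add_right inner_diff_right inner_axis algebra_simps)
    finally show False using cak by simp
  qed
  obtain k0 where "a$k0 \<noteq> 0" using a0 by (metis vec_eq_iff zero_index)
  then have ak0: "0 < a$k0" using anon[of k0] by simp
  define sg where "sg = (\<Sum>k\<in>UNIV. a$k)"
  have sgpos: "0 < sg" unfolding sg_def
    using ak0 member_le_sum[of k0 UNIV "\<lambda>k. a$k"] anon by fastforce
  define zz where "zz k = a$k / sg" for k
  have zz_sum: "(\<Sum>k\<in>UNIV. zz k) = 1" unfolding zz_def using sgpos
    by (simp add: sum_divide_distrib[symmetric] sg_def)
  have zz_nn: "0 \<le> zz k" for k unfolding zz_def using anon[of k] sgpos by simp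
  have key: "1 - e \<le> (\<Sum>k\<in>UNIV. zz k * (\<Sum>j\<in>J. Gmat J k j * \<xi> j))" if "feas \<xi>" for \<xi>
  proof -
    have "0 \<le> inner a (Gv \<xi> + 0 - p)" using aS inS[OF that, of 0] by simp
    then have "0 \<le> (\<Sum>k\<in>UNIV. a$k * (\<Sum>j\<in>J. Gmat J k j * \<xi> j) - a$k * (1 - e))"
      unfolding Gv_def p_def by (simp add: inner_vec_def algebra_simps)
    then have "(1 - e) * sg \<le> (\<Sum>k\<in>UNIV. a$k * (\<Sum>j\<in>J. Gmat J k j * \<xi> j))"
      unfolding sg_def by (simp add: sum_subtractf sum_distrib_left sum.distrib algebra_simps)
    then have "1 - e \<le> (\<Sum>k\<in>UNIV. a$k * (\<Sum>j\<in>J. Gmat J k j * \<xi> j)) / sg"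
      using sgpos by (simp add: field_simps)
    also have "\<dots> = (\<Sum>k\<in>UNIV. zz k * (\<Sum>j\<in>J. Gmat J k j * \<xi> j))"
      unfolding zz_def by (simp add: sum_divide_distrib)
    finally show ?thesis .
  qed
  have exk: "\<exists>k. (i,k) \<in> J" for i
  proof (rule ccontr)
    assume "\<not> ?thesis"
    then have "\<forall>j\<in>J. Rmat J mu i j = 0" unfolding Rmat_def by (auto split: prod.splits)
    then have "(\<Sum>j\<in>J. Rmat J mu i j * \<xi>0 j) = 0" by simp
    then show False using f0 lam_pos[of i] unfolding feas_def by auto
  qed
  have exm: "\<forall>i. \<exists>k. (i,k) \<in> J \<and> (\<forall>k'. (i,k') \<in> J \<longrightarrow> zz k / mu (i,k) \<le> zz k' / mu (i,k'))"
  proof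
    fix i
    define K where "K = {k. (i,k) \<in> J}"
    define f where "f k = zz k / mu (i,k)" for k
    have fin: "finite (f ` K)" by simp
    have ne: "f ` K \<noteq> {}" using exk[of i] unfolding K_def by auto
    obtain k where k: "k \<in> K" "f k = Min (f ` K)" using Min_in[OF fin ne] by auto
    have "\<forall>k'\<in>K. f k \<le> f k'" using k(2) Min_le[OF fin] by simp
    then show "\<exists>k. (i,k) \<in> J \<and> (\<forall>k'. (i,k') \<in> J \<longrightarrow> zz k / mu (i,k) \<le> zz k' / mu (i,k'))"
      using k(1) unfolding K_def f_def by auto
  qed
  obtain kf where kf0: "\<forall>i. (i, kf i) \<in> J \<and> (\<forall>k'. (i,k') \<in> J \<longrightarrow> zz (kf i) / mu (i, kf i) \<le> zz k' / mu (i,k'))"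
    using choice[OF exm] by blast
  have kf: "\<And>i. (i, kf i) \<in> J"
    "\<And>i k'. (i,k') \<in> J \<Longrightarrow> zz (kf i) / mu (i, kf i) \<le> zz k' / mu (i,k')"
    using kf0 by auto
  define yy where "yy i = zz (kf i) / mu (i, kf i)" for i
  have "dual_feasible J mu yy zz"
    unfolding dual_feasible_def
  proof (intro conjI ballI allI)
    show "(\<Sum>k\<in>UNIV. zz k) = 1" by (rule zz_sum)
    show "0 \<le> zz k" for k by (rule zz_nn)
    fix j assume j: "j \<in> J"
    obtain i k where jik: "j = (i,k)" by fastforce
    have "(\<Sum>i'\<in>UNIV. yy i' * Rmat J mu i' j) = yy i * mu j"
      using j unfolding Rmat_def jik by (simp add: if_distrib sum.delta cong: if_cong)
    moreover have "(\<Sum>k'\<in>UNIV. zz k' * Gmat J k' j) = zz k"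
      using j unfolding Gmat_def jik by (simp add: if_distrib sum.delta cong: if_cong)
    moreover have "yy i * mu j \<le> zz k"
      using kf(2)[of i k] j mu_pos[OF j] unfolding yy_def jik by (simp add: field_simps)
    ultimately show "(\<Sum>i\<in>UNIV. yy i * Rmat J mu i j) \<le> (\<Sum>k\<in>UNIV. zz k * Gmat J k j)" by simp
  qed
  then have yyle: "(\<Sum>i\<in>UNIV. yy i * lam i) \<le> (\<Sum>i\<in>UNIV. y i * lam i)"
    using dopt unfolding dual_optimal_def by blast
  define xs where "xs j = (if j \<in> J \<and> snd j = kf (fst j) then lam (fst j) / mu j else 0)" for j
  have xs_alt: "xs j = (if j = (fst j, kf (fst j)) then lam (fst j) / mu (fst j, kf (fst j)) else 0)" for j
    unfolding xs_def using kf(1) by (cases j) auto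
  have "feas xs"
    unfolding feas_def
  proof (intro conjI allI ballI)
    fix i
    have "(\<Sum>j\<in>J. Rmat J mu i j * xs j) = (\<Sum>j\<in>J. if j = (i, kf i) then lam i else 0)"
    proof (rule sum.cong)
      fix j assume j: "j \<in> J"
      show "Rmat J mu i j * xs j = (if j = (i, kf i) then lam i else 0)"
        using j mu_pos[OF j] unfolding Rmat_def xs_def by (cases j) auto
    qed simp
    also have "\<dots> = lam i" using kf(1)[of i] by (simp add: sum.delta')
    finally show "(\<Sum>j\<in>J. Rmat J mu i j * xs j) = lam i" .
  next
    fix j assume "j \<in> J" then show "0 \<le> xs j"
      unfolding xs_def using lam_pos mu_pos by (simp add: less_imp_le)
  qed
  have "(\<Sum>k\<in>UNIV. zz k * (\<Sum>j\<in>J. Gmat J k j * xs j)) = (\<Sum>j\<in>J. xs j * zz (snd j))"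
  proof -
    have "(\<Sum>k\<in>UNIV. zz k * (\<Sum>j\<in>J. Gmat J k j * xs j)) = (\<Sum>j\<in>J. \<Sum>k\<in>UNIV. zz k * Gmat J k j * xs j)"
      unfolding sum_distrib_left mult.assoc by (rule sum.swap)
    also have "\<dots> = (\<Sum>j\<in>J. xs j * zz (snd j))"
    proof (rule sum.cong[OF refl])
      fix j assume j: "j \<in> J"
      have "(\<Sum>k\<in>UNIV. zz k * Gmat J k j * xs j) = (\<Sum>k\<in>UNIV. if snd j = k then xs j * zz (snd j) else 0)"
        by (rule sum.cong[OF refl]) (auto simp: Gmat_def j)
      then show "(\<Sum>k\<in>UNIV. zz k * Gmat J k j * xs j) = xs j * zz (snd j)" by simp
    qed
    finally show ?thesis .
  qed
  also have "\<dots> = (\<Sum>j\<in>range (\<lambda>i. (i, kf i)). xs j * zz (snd j))"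
    by (rule sum.mono_neutral_cong_right) (auto simp: kf(1) xs_def)
  also have "\<dots> = (\<Sum>i\<in>UNIV. yy i * lam i)"
    by (subst sum.reindex) (auto simp: inj_on_def xs_def kf(1) yy_def mult.commute)
  finally show "1 \<le> (\<Sum>i\<in>UNIV. y i * lam i) + e"
    using key[OF \<open>feas xs\<close>] yyle e by linarith
qed


lemma Rsum: fixes J :: "('i::finite \<times> 'k::finite) set" shows "j \<in> J \<Longrightarrow> (\<Sum>i\<in>UNIV. f i * Rmat J mu i j) = f (fst j) * mu j"
proof -
  assume j: "j \<in> J"
  have "(\<Sum>i\<in>UNIV. f i * Rmat J mu i j) = (\<Sum>i\<in>UNIV. if fst j = i then f (fst j) * mu j else 0)"
    by (rule sum.cong[OF refl]) (auto simp: Rmat_def j)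
  then show ?thesis by simp
qed

lemma Gsum: fixes J :: "('i::finite \<times> 'k::finite) set" shows "j \<in> J \<Longrightarrow> (\<Sum>k\<in>UNIV. f k * Gmat J k j) = f (snd j)"
proof -
  assume j: "j \<in> J"
  have "(\<Sum>k\<in>UNIV. f k * Gmat J k j) = (\<Sum>k\<in>UNIV. if snd j = k then f (snd j) else 0)"
    by (rule sum.cong[OF refl]) (auto simp: Gmat_def j)
  then show ?thesis by simp
qed

lemma dual_opt_nonneg:
  fixes J :: "('i::finite \<times> 'k::finite) set"
  assumes lam_pos: "\<And>i. 0 < lam i"
    and dopt: "dual_optimal J lam mu y z"
  shows "0 \<le> y i"
proof (rule ccontr)
  assume neg: "\<not> 0 \<le> y i"
  define y' where "y' = y(i := 0)"
  have df: "dual_feasible J mu y z" using dopt unfolding dual_optimal_def by simp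
  have "dual_feasible J mu y' z"
    unfolding dual_feasible_def
  proof (intro conjI ballI allI)
    show "(\<Sum>k\<in>UNIV. z k) = 1" "0 \<le> z k" for k using df unfolding dual_feasible_def by auto
    fix j assume j: "j \<in> J"
    have c: "y (fst j) * mu j \<le> z (snd j)" "0 \<le> z (snd j)"
      using df j Rsum[OF j, of y] Gsum[OF j, of z] unfolding dual_feasible_def by auto
    show "(\<Sum>i\<in>UNIV. y' i * Rmat J mu i j) \<le> (\<Sum>k\<in>UNIV. z k * Gmat J k j)"
      unfolding Rsum[OF j] Gsum[OF j] y'_def using c by auto
  qed
  then have le: "(\<Sum>i\<in>UNIV. y' i * lam i) \<le> (\<Sum>i\<in>UNIV. y i * lam i)"
    using dopt unfolding dual_optimal_def by blast
  have "(\<Sum>i'\<in>UNIV. y' i' * lam i') - (\<Sum>i'\<in>UNIV. y i' * lam i') = (\<Sum>i'\<in>UNIV. if i' = i then - (y i * lam i) else 0)"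
    unfolding sum_subtractf[symmetric] by (rule sum.cong[OF refl]) (auto simp: y'_def)
  also have "\<dots> = - (y i * lam i)" by simp
  finally have "(\<Sum>i'\<in>UNIV. y' i' * lam i') - (\<Sum>i'\<in>UNIV. y i' * lam i') = - (y i * lam i)" .
  moreover have "y i * lam i < 0" using neg lam_pos[of i] by (simp add: mult_neg_pos)
  ultimately show False using le by linarith
qed

theorem lemma4p1:
  fixes M :: "'a measure"
    and J :: "('i::finite \<times> 'k::finite) set"
    and lam :: "'i \<Rightarrow> real" and mu :: "'i \<times> 'k \<Rightarrow> real"
    and ystar :: "'i \<Rightarrow> real" and zstar :: "'k \<Rightarrow> real"
    and lamN :: "nat \<Rightarrow> 'i \<Rightarrow> real" and muN :: "nat \<Rightarrow> 'i \<times> 'k \<Rightarrow> real"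
    and lamhat :: "'i \<Rightarrow> real" and muhat :: "'i \<times> 'k \<Rightarrow> real"
    and Ac :: "'i \<Rightarrow> real \<Rightarrow> 'a \<Rightarrow> real" and Sc :: "'i \<times> 'k \<Rightarrow> real \<Rightarrow> 'a \<Rightarrow> real"
    and uA :: "'i \<Rightarrow> nat \<Rightarrow> 'a \<Rightarrow> real" and uS :: "'i \<times> 'k \<Rightarrow> nat \<Rightarrow> 'a \<Rightarrow> real"
    and Ups :: "'a \<Rightarrow> 'u::polish_space"
    and n :: nat
    and T :: "'i \<times> 'k \<Rightarrow> real \<Rightarrow> 'a \<Rightarrow> real"
    and t :: real
  assumes lam_pos: "\<And>i. 0 < lam i"
    and mu_pos: "\<And>j. j \<in> J \<Longrightarrow> 0 < mu j"
    and standing: "standing_assumption J lam mu"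
    and dual_opt: "dual_optimal J lam mu ystar zstar"
    and lamN_pos: "\<And>m i. 0 < lamN m i"
    and muN_pos: "\<And>m j. j \<in> J \<Longrightarrow> 0 < muN m j"
    and lamN_lim: "\<And>i. (\<lambda>m. ratehat m (lamN m i) (lam i)) \<longlonglongrightarrow> lamhat i"
    and muN_lim: "\<And>j. j \<in> J \<Longrightarrow> (\<lambda>m. ratehat m (muN m j) (mu j)) \<longlonglongrightarrow> muhat j"
    and prob: "prob_space M"
    and A_meas: "\<And>i s. Ac i s \<in> borel_measurable M"
    and S_meas: "\<And>j s. j \<in> J \<Longrightarrow> Sc j s \<in> borel_measurable M"
    and Ups_meas: "Ups \<in> borel_measurable M"
    and A_renewal: "\<And>i. renewal_process M (Ac i) (uA i)"
    and S_renewal: "\<And>j. j \<in> J \<Longrightarrow> renewal_process M (Sc j) (uS j)"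
    and scvA_pos: "\<And>i. 0 < scv M (uA i 1)"
    and indep: "prob_space.indep_sets M (source_events M Ac Sc Ups)
                  (range ArrSrc \<union> SrvSrc ` J \<union> {UpsSrc})"
    and n_pos: "1 \<le> n"
    and adm: "admissible M J Ac Sc Ups (lamN n) (muN n) T"
    and t_nonneg: "0 \<le> t"
  shows "\<forall>\<omega>\<in>space M.
           What n ystar J Ac Sc (lamN n) (muN n) T t \<omega>
           \<ge> Gamma1 (\<lambda>s. Fhat n ystar J lam mu Ac Sc (lamN n) (muN n) T s \<omega>) t"
  proof
  fix \<omega> assume \<omega>: "\<omega> \<in> space M"
  define sq where "sq = sqrt (real n)"
  have sqpos: "0 < sq" using n_pos unfolding sq_def by simp
  have sqsq: "sq * sq = real n" unfolding sq_def using n_pos by simp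
  define L where "L = (\<Sum>i\<in>UNIV. ystar i * lam i)"
  have L1: "1 \<le> L" unfolding L_def
    using dual_value_ge[OF lam_pos mu_pos _ dual_opt] standing unfolding standing_assumption_def by blast
  have ynn: "\<And>i. 0 \<le> ystar i" using dual_opt_nonneg[OF lam_pos dual_opt] .
  have df: "dual_feasible J mu ystar zstar" using dual_opt unfolding dual_optimal_def by simp
  have yz: "ystar (fst j) * mu j \<le> zstar (snd j)" if j: "j \<in> J" for j
    using df j Rsum[OF j, of ystar] Gsum[OF j, of zstar] unfolding dual_feasible_def by auto
  have zsum: "(\<Sum>k\<in>UNIV. zstar k) = 1" and znn: "\<And>k. 0 \<le> zstar k"
    using df unfolding dual_feasible_def by auto
  have T0: "\<And>j. j \<in> J \<Longrightarrow> T j 0 \<omega> = 0"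
    and Tmono: "\<And>j. j \<in> J \<Longrightarrow> mono_on {0..} (\<lambda>t. T j t \<omega>)"
    and Xnn: "\<And>i t. 0 \<le> t \<Longrightarrow> 0 \<le> Xn J Ac Sc (lamN n) (muN n) T i t \<omega>"
    and Imono: "\<And>k. mono_on {0..} (\<lambda>t. In J T k t \<omega>)"
    using adm \<omega> unfolding admissible_def by auto
  define Yf where "Yf s = L * s - (\<Sum>j\<in>J. ystar (fst j) * mu j * T j s \<omega>)" for s
  have Wnn: "0 \<le> What n ystar J Ac Sc (lamN n) (muN n) T s \<omega>" if "0 \<le> s" for s
    unfolding What_def Xhat_def using ynn Xnn[OF that] sqpos
    by (intro sum_nonneg mult_nonneg_nonneg divide_nonneg_nonneg) (auto simp: sq_def)
  have FW: "Fhat n ystar J lam mu Ac Sc (lamN n) (muN n) T s \<omega>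
            = What n ystar J Ac Sc (lamN n) (muN n) T s \<omega> - sq * Yf s" for s
  proof -
    have jp: "Shat n Sc (muN n) j (T j s \<omega>) \<omega> + ratehat n (muN n j) (mu j) * T j s \<omega>
              = Dn Sc (muN n) T j s \<omega> / sq - sq * (mu j * T j s \<omega>)" for j
      unfolding Shat_def ratehat_def Dn_def sq_def[symmetric] sqsq[symmetric]
      using sqpos by (simp add: field_simps)
    have ip: "Ahat n Ac (lamN n) i s \<omega> + ratehat n (lamN n i) (lam i) * s
              = An Ac (lamN n) i s \<omega> / sq - sq * (lam i * s)" for i
      unfolding Ahat_def ratehat_def sq_def[symmetric] sqsq[symmetric]
      using sqpos by (simp add: field_simps)
    have per_i: "Ahat n Ac (lamN n) i s \<omega>
         - (\<Sum>j\<in>{j\<in>J. fst j = i}. Shat n Sc (muN n) j (T j s \<omega>) \<omega>)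
         + ratehat n (lamN n i) (lam i) * s
         - (\<Sum>j\<in>{j\<in>J. fst j = i}. ratehat n (muN n j) (mu j) * T j s \<omega>)
       = Xn J Ac Sc (lamN n) (muN n) T i s \<omega> / sq - sq * (lam i * s - (\<Sum>j\<in>{j\<in>J. fst j = i}. mu j * T j s \<omega>))" for i
    proof -
      have "(\<Sum>j\<in>{j\<in>J. fst j = i}. Shat n Sc (muN n) j (T j s \<omega>) \<omega>)
           + (\<Sum>j\<in>{j\<in>J. fst j = i}. ratehat n (muN n j) (mu j) * T j s \<omega>)
           = (\<Sum>j\<in>{j\<in>J. fst j = i}. Dn Sc (muN n) T j s \<omega> / sq - sq * (mu j * T j s \<omega>))"
        unfolding sum.distrib[symmetric] jp ..
      also have "\<dots> = (\<Sum>j\<in>{j\<in>J. fst j = i}. Dn Sc (muN n) T j s \<omega>) / sq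
                        - sq * (\<Sum>j\<in>{j\<in>J. fst j = i}. mu j * T j s \<omega>)"
        by (simp add: sum_subtractf sum_divide_distrib sum_distrib_left)
      finally show ?thesis using ip[of i] unfolding Xn_def diff_divide_distrib right_diff_distrib by linarith
    qed
    have grp: "(\<Sum>i\<in>UNIV. ystar i * (\<Sum>j\<in>{j\<in>J. fst j = i}. mu j * T j s \<omega>))
               = (\<Sum>j\<in>J. ystar (fst j) * mu j * T j s \<omega>)"
    proof -
      have "(\<Sum>i\<in>UNIV. ystar i * (\<Sum>j\<in>{j\<in>J. fst j = i}. mu j * T j s \<omega>))
          = (\<Sum>i\<in>UNIV. (\<Sum>j\<in>{j\<in>J. fst j = i}. ystar (fst j) * mu j * T j s \<omega>))"
        by (rule sum.cong[OF refl]) (simp add: sum_distrib_left mult.assoc)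
      also have "\<dots> = (\<Sum>j\<in>J. ystar (fst j) * mu j * T j s \<omega>)"
        by (rule sum.group) auto
      finally show ?thesis .
    qed
    have "Fhat n ystar J lam mu Ac Sc (lamN n) (muN n) T s \<omega>
        = (\<Sum>i\<in>UNIV. ystar i * (Xn J Ac Sc (lamN n) (muN n) T i s \<omega> / sq)
             - sq * (ystar i * lam i * s - ystar i * (\<Sum>j\<in>{j\<in>J. fst j = i}. mu j * T j s \<omega>)))"
      unfolding Fhat_def per_i by (simp add: algebra_simps)
    also have "\<dots> = What n ystar J Ac Sc (lamN n) (muN n) T s \<omega>
         - sq * (L * s - (\<Sum>i\<in>UNIV. ystar i * (\<Sum>j\<in>{j\<in>J. fst j = i}. mu j * T j s \<omega>)))"
      unfolding What_def Xhat_def sq_def[symmetric] L_def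
      by (simp add: sum_subtractf sum_distrib_left sum_distrib_right right_diff_distrib)
    finally show ?thesis unfolding grp Yf_def .
  qed
  have Y0: "Yf 0 = 0" unfolding Yf_def using T0 by simp
  have Ymono: "Yf s \<le> Yf t'" if st: "0 \<le> s" "s \<le> t'" for s t'
  proof -
    define dT where "dT j = T j t' \<omega> - T j s \<omega>" for j
    have dT: "0 \<le> dT j" if "j \<in> J" for j
      using mono_onD[OF Tmono[OF that], of s t'] st unfolding dT_def by auto
    have Ik: "(\<Sum>j\<in>J. Gmat J k j * dT j) \<le> t' - s" for k
      using mono_onD[OF Imono[of k], of s t'] st unfolding dT_def In_def
      by (simp add: sum_subtractf right_diff_distrib)
    have "(\<Sum>j\<in>J. ystar (fst j) * mu j * dT j) \<le> (\<Sum>j\<in>J. zstar (snd j) * dT j)"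
      by (rule sum_mono) (simp add: mult_right_mono yz dT)
    also have "\<dots> = (\<Sum>j\<in>J. \<Sum>k\<in>UNIV. zstar k * (Gmat J k j * dT j))"
    proof (rule sum.cong[OF refl])
      fix j assume j: "j \<in> J"
      show "zstar (snd j) * dT j = (\<Sum>k\<in>UNIV. zstar k * (Gmat J k j * dT j))"
        unfolding mult.assoc[symmetric] sum_distrib_right[symmetric] Gsum[OF j] ..
    qed
    also have "\<dots> = (\<Sum>k\<in>UNIV. zstar k * (\<Sum>j\<in>J. Gmat J k j * dT j))"
      unfolding sum_distrib_left by (rule sum.swap)
    also have "\<dots> \<le> (\<Sum>k\<in>UNIV. zstar k * (t' - s))"
      by (rule sum_mono) (simp add: mult_left_mono Ik znn)
    also have "\<dots> = t' - s" by (simp add: sum_distrib_right[symmetric] zsum)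
    finally have A: "(\<Sum>j\<in>J. ystar (fst j) * mu j * dT j) \<le> t' - s" .
    have "Yf t' - Yf s = L * (t' - s) - (\<Sum>j\<in>J. ystar (fst j) * mu j * dT j)"
      unfolding Yf_def dT_def by (simp add: sum_subtractf right_diff_distrib)
    moreover have "t' - s \<le> L * (t' - s)" using L1 st mult_right_mono[of 1 L "t' - s"] by simp
    ultimately show ?thesis using A by linarith
  qed
  have "(SUP s\<in>{0..t}. max 0 (- Fhat n ystar J lam mu Ac Sc (lamN n) (muN n) T s \<omega>)) \<le> sq * Yf t"
  proof (rule cSUP_least)
    show "{0..t} \<noteq> {}" using t_nonneg by simp
    fix s assume s: "s \<in> {0..t}"
    have "Yf s \<le> Yf t" "0 \<le> Yf t" using Ymono[of s t] Ymono[of 0 t] s Y0 t_nonneg by auto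
    then have "sq * Yf s \<le> sq * Yf t" "0 \<le> sq * Yf t" using sqpos by (auto simp: mult_left_mono)
    then show "max 0 (- Fhat n ystar J lam mu Ac Sc (lamN n) (muN n) T s \<omega>) \<le> sq * Yf t"
      using FW[of s] Wnn[of s] s by (auto simp: max_def)
  qed
  then show "What n ystar J Ac Sc (lamN n) (muN n) T t \<omega>
           \<ge> Gamma1 (\<lambda>s. Fhat n ystar J lam mu Ac Sc (lamN n) (muN n) T s \<omega>) t"
    unfolding Gamma1_def using FW[of t] by simp
qed

end
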